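(* Fix $\rho\in\Gamma$. Suppose that $(Y^{(1)},\nu^{(1)}_{ij},\mu^{(1)}_{ij},\nu^{(1)}_{i0},\mu^{(1)}_{0i})$ and $(Y^{(2)},\nu^{(2)}_{ij},\mu^{(2)}_{ij},\nu^{(2)}_{i0},\mu^{(2)}_{0i})$ (with $Y^{(k)}=Y^{(k)\prime}>0$, all constants positive, $j\in S^\varphi_i$, $i=1,\dots,N$, $\nu_{i0}$ defined for $i$ with $d_i=1$ and $\mu_{0i}$ for $i$ with $\bar d_i=1$) both satisfy $\Upsilon_i<0$ for all $i=1,\dots,N$. For $\gamma\in[0,1]$ define $Y_\gamma=\gamma Y^{(1)}+(1-\gamma)Y^{(2)}$, $\nu_{ij,\gamma}=[\gamma(\nu^{(1)}_{ij})^{-1}+(1-\gamma)(\nu^{(2)}_{ij})^{-1}]^{-1}$, $\mu_{ij,\gamma}=[\gamma(\mu^{(1)}_{ij})^{-1}+(1-\gamma)(\mu^{(2)}_{ij})^{-1}]^{-1}$, and similarly $\nu_{i0,\gamma}$ (for $d_i=1$) and $\mu_{0i,\gamma}$ (for $\bar d_i=1$). Then $(Y_\gamma,\nu_{ij,\gamma},\mu_{ij,\gamma},\nu_{i0,\gamma},\mu_{0i,\gamma})$ also satisfies $\Upsilon_i<0$ for all $i=1,\dots,N$.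
   Context: Graphs: node set $\mathcal{V}=\{0,\dots,N\}$, followers $\mathcal{V}_0=\{1,\dots,N\}$; directed interconnection graph with edge set $\mathcal{E}^\varphi$ ($(j,i)$ = edge from $j$ to $i$). For $i\in\mathcal{V}_0$: $S^\varphi_i=\{j\in\mathcal{V}_0:(j,i)\in\mathcal{E}^\varphi\}$; $d_i=1$ if $(0,i)\in\mathcal{E}^\varphi$ else $0$; $\bar d_i=1$ if $(i,0)\in\mathcal{E}^\varphi$ else $0$. Data: $\Gamma=[\rho_{\min},\rho_{\max}]$, continuous $A:\Gamma\to\mathbb{R}^{n\times n}$, $B_1\in\mathbb{R}^{n\times p}$, $B_2\in\mathbb{R}^{n\times m}$, matrices $C_{ij}\in\mathbb{R}^{q_{ij}\times n}$ for $(j,i)\in\mathcal{E}^\varphi$, $R=R'>0$, and a fixed matrix $\bar Q=\bar Q'>0$ (in the paper $\bar Q=(\sigma^2/\hat\lambda)Q$ for a weighting matrix $Q>0$ and graph-dependent positive constants $\sigma,\hat\lambda$). For $i\in\mathcal{V}_0$: $\hat C_i$ stacks $C_{ij}$ over $j\in S^\varphi_i$ and $\Phi_i=\mathrm{diag}[\nu_{ij}^{-1}I,\ j\in S^\varphi_i]$; $\bar C_i$ stacks $C_{ri}$ over $r\in\mathcal{V}_0$ with $i\in S^\varphi_r$, and $\Omega_i=\mathrm{diag}[\mu_{ri}^{-1}I]$ over the same $r$. Define $Z_i=A(\rho)Y+YA(\rho)'-B_1R^{-1}B_1'+\big(\sum_{j\in S^\varphi_i}(\nu_{ij}^{-1}+\mu_{ij}^{-1})+d_i\nu_{i0}^{-1}+\sum_{k\in\mathcal{V}_0:\bar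 d_k=1}\mu_{0k}^{-1}\big)B_2B_2'$ (the $\nu_{i0}$ term absent if $d_i=0$), and $$\Upsilon_i=\begin{bmatrix}Z_i & Y\bar Q^{1/2} & Y\hat C_i' & Y\bar C_i' & YC_{i0}' & YC_{0i}'\\ \bar Q^{1/2}Y & -I & 0&0&0&0\\ \hat C_iY&0&-\Phi_i&0&0&0\\ \bar C_iY&0&0&-\Omega_i&0&0\\ C_{i0}Y&0&0&0&-\nu_{i0}^{-1}I&0\\ C_{0i}Y&0&0&0&0&-(N\mu_{0i})^{-1}I\end{bmatrix},$$ where the block row/column with $C_{i0}$ is present only if $d_i=1$ and the one with $C_{0i}$ only if $\bar d_i=1$. *)

theory Defs
  imports Complex_Main "Jordan_Normal_Form.Gauss_Jordan_Elimination"
begin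

definition neg_def_mat :: "real mat \<Rightarrow> bool" where
  "neg_def_mat M \<longleftrightarrow> M \<in> carrier_mat (dim_row M) (dim_row M) \<and> transpose_mat M = M \<and>
     (\<forall>v \<in> carrier_vec (dim_row M). v \<noteq> 0\<^sub>v (dim_row M) \<longrightarrow> v \<bullet> (M *\<^sub>v v) < 0)"

definition pos_def_mat :: "real mat \<Rightarrow> bool" where
  "pos_def_mat M \<longleftrightarrow> M \<in> carrier_mat (dim_row M) (dim_row M) \<and> transpose_mat M = M \<and>
     (\<forall>v \<in> carrier_vec (dim_row M). v \<noteq> 0\<^sub>v (dim_row M) \<longrightarrow> v \<bullet> (M *\<^sub>v v) > 0)"

(* Graph notions. Nodes 0..N, followers 1..N; (j,i) \<in> E is the edge from j to i. *)
definition Sphi :: "(nat \<times> nat) set \<Rightarrow> nat \<Rightarrow> nat \<Rightarrow> nat set" where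
  "Sphi E N i = {j \<in> {1..N}. (j, i) \<in> E}"

definition Sbar :: "(nat \<times> nat) set \<Rightarrow> nat \<Rightarrow> nat \<Rightarrow> nat set" where
  "Sbar E N i = {r \<in> {1..N}. i \<in> Sphi E N r}"

definition dd :: "(nat \<times> nat) set \<Rightarrow> nat \<Rightarrow> bool" where
  "dd E i \<longleftrightarrow> (0, i) \<in> E"

definition ddbar :: "(nat \<times> nat) set \<Rightarrow> nat \<Rightarrow> bool" where
  "ddbar E i \<longleftrightarrow> (i, 0) \<in> E"

definition vstack :: "nat \<Rightarrow> real mat list \<Rightarrow> real mat" where
  "vstack n Ms = foldr (\<lambda>A B. A @\<^sub>r B) Ms (0\<^sub>m 0 n)"

definition minv :: "real mat \<Rightarrow> real mat" where
  "minv R = the (mat_inverse R)"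

definition Chat where
  "Chat E N n C i = vstack n (map (\<lambda>j. C i j) (sorted_list_of_set (Sphi E N i)))"
definition Phi where
  "Phi E N C (\<nu>::nat\<Rightarrow>nat\<Rightarrow>real) i = diag_block_mat
     (map (\<lambda>j. (1 / \<nu> i j) \<cdot>\<^sub>m 1\<^sub>m (dim_row (C i j))) (sorted_list_of_set (Sphi E N i)))"
definition Cbar where
  "Cbar E N n C i = vstack n (map (\<lambda>r. C r i) (sorted_list_of_set (Sbar E N i)))"
definition Omega where
  "Omega E N C (\<mu>::nat\<Rightarrow>nat\<Rightarrow>real) i = diag_block_mat
     (map (\<lambda>r. (1 / \<mu> r i) \<cdot>\<^sub>m 1\<^sub>m (dim_row (C r i))) (sorted_list_of_set (Sbar E N i)))"

definition Zmat where
  "Zmat E N (Arho::real mat) B1 B2 R (\<nu>::nat\<Rightarrow>nat\<Rightarrow>real) \<mu> Y i =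
     Arho * Y + Y * transpose_mat Arho - B1 * minv R * transpose_mat B1
     + ((\<Sum>j\<in>Sphi E N i. 1 / \<nu> i j + 1 / \<mu> i j)
        + (if dd E i then 1 / \<nu> i 0 else 0)
        + (\<Sum>k\<in>{k \<in> {1..N}. ddbar E k}. 1 / \<mu> 0 k)) \<cdot>\<^sub>m (B2 * transpose_mat B2)"

(* Writing K_i for the vertical stack of
   Qh (= \<bar>Q^{1/2}), \<hat>C_i, \<bar>C_i, C_i0 (if d_i), C_0i (if \<bar>d_i), the first block column below Z_i is K_i Y,
   the first block row to the right of Z_i is Y K_i' (= [Y \<bar>Q^{1/2}, Y \<hat>C_i', ...] since \<bar>Q^{1/2} is symmetric),
   and the remaining lower-right part is block diagonal. *)
definition Upsilon where
  "Upsilon E N n Arho B1 B2 R Qh C Y (\<nu>::nat\<Rightarrow>nat\<Rightarrow>real) \<mu> i =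
    (let K = vstack n ([Qh, Chat E N n C i, Cbar E N n C i]
                       @ (if dd E i then [C i 0] else [])
                       @ (if ddbar E i then [C 0 i] else []));
         D = diag_block_mat ([- 1\<^sub>m (dim_row Qh), - Phi E N C \<nu> i, - Omega E N C \<mu> i]
                       @ (if dd E i then [- ((1 / \<nu> i 0) \<cdot>\<^sub>m 1\<^sub>m (dim_row (C i 0)))] else [])
                       @ (if ddbar E i then [- ((1 / (real N * \<mu> 0 i)) \<cdot>\<^sub>m 1\<^sub>m (dim_row (C 0 i)))] else []))
     in four_block_mat (Zmat E N Arho B1 B2 R \<nu> \<mu> Y i) (Y * transpose_mat K) (K * Y) D)"

definition hcomb :: "real \<Rightarrow> real \<Rightarrow> real \<Rightarrow> real" where
  "hcomb \<gamma> a b = 1 / (\<gamma> / a + (1 - \<gamma>) / b)"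

end

theory Submission
  imports Defs
begin


definition cc :: "real \<Rightarrow> real mat \<Rightarrow> real mat \<Rightarrow> real mat \<Rightarrow> bool" where
 "cc g M M1 M2 \<longleftrightarrow> dim_row M1 = dim_row M \<and> dim_row M2 = dim_row M \<and> dim_col M1 = dim_col M
   \<and> dim_col M2 = dim_col M \<and> (\<forall>i<dim_row M. \<forall>j<dim_col M. M$$(i,j) = g*M1$$(i,j) + (1-g)*M2$$(i,j))"

lemma ccI: assumes "dim_row M1 = dim_row M" "dim_row M2 = dim_row M" "dim_col M1 = dim_col M" "dim_col M2 = dim_col M"
  "\<And>i j. i<dim_row M \<Longrightarrow> j<dim_col M \<Longrightarrow> M$$(i,j) = g*M1$$(i,j) + (1-g)*M2$$(i,j)"
  shows "cc g M M1 M2" using assms unfolding cc_def by auto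

lemma ccD: assumes "cc g M M1 M2"
  shows "dim_row M1 = dim_row M" "dim_row M2 = dim_row M" "dim_col M1 = dim_col M" "dim_col M2 = dim_col M"
  "\<And>i j. i<dim_row M \<Longrightarrow> j<dim_col M \<Longrightarrow> M$$(i,j) = g*M1$$(i,j) + (1-g)*M2$$(i,j)"
  using assms unfolding cc_def by auto

lemma cc_const: "cc g M M M"
  by (rule ccI) (auto simp: algebra_simps)

lemma cc_plus: assumes a: "cc g A A1 A2" and b: "cc g B B1 B2" and d: "dim_row A = dim_row B" "dim_col A = dim_col B"
  shows "cc g (A+B) (A1+B1) (A2+B2)"
proof -
  note da = ccD[OF a] and db = ccD[OF b]
  show ?thesis
    by (rule ccI) (auto simp: da(1-4) db(1-4) da(5)[simplified d] db(5) algebra_simps)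
qed

lemma cc_minus: assumes a: "cc g A A1 A2" and b: "cc g B B1 B2" and d: "dim_row A = dim_row B" "dim_col A = dim_col B"
  shows "cc g (A-B) (A1-B1) (A2-B2)"
proof -
  note da = ccD[OF a] and db = ccD[OF b]
  show ?thesis
    by (rule ccI) (auto simp: da(1-4) db(1-4) da(5)[simplified d] db(5) algebra_simps)
qed

lemma cc_uminus: assumes a: "cc g A A1 A2" shows "cc g (-A) (-A1) (-A2)"
proof -
  note da = ccD[OF a]
  show ?thesis
    by (rule ccI) (auto simp: da algebra_simps)
qed

lemma cc_smult: assumes s: "s = g*s1 + (1-g)*s2" shows "cc g (s \<cdot>\<^sub>m M) (s1 \<cdot>\<^sub>m M) (s2 \<cdot>\<^sub>m M)"
  by (rule ccI) (auto simp: s algebra_simps)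

lemma cc_multr: assumes a: "cc g Y Y1 Y2" and d: "dim_col Y = dim_row K"
  shows "cc g (Y*K) (Y1*K) (Y2*K)"
proof -
  note da = ccD[OF a]
  show ?thesis
  proof (rule ccI)
    fix i j assume ij: "i < dim_row (Y*K)" "j < dim_col (Y*K)"
    have "(Y*K)$$(i,j) = (\<Sum>x\<in>{0..<dim_row K}. Y$$(i,x) * K$$(x,j))"
      using ij d by (simp add: scalar_prod_def)
    also have "\<dots> = (\<Sum>x\<in>{0..<dim_row K}. g*(Y1$$(i,x) * K$$(x,j)) + (1-g)*(Y2$$(i,x) * K$$(x,j)))"
      by (rule sum.cong) (use ij d in \<open>simp_all add: da(5) algebra_simps\<close>)
    also have "\<dots> = g*(Y1*K)$$(i,j) + (1-g)*(Y2*K)$$(i,j)"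
      using ij d da(1-4) by (simp add: scalar_prod_def sum.distrib sum_distrib_left)
    finally show "(Y*K)$$(i,j) = g*(Y1*K)$$(i,j) + (1-g)*(Y2*K)$$(i,j)" .
  qed (use da in auto)
qed

lemma cc_multl: assumes a: "cc g Y Y1 Y2" and d: "dim_col K = dim_row Y"
  shows "cc g (K*Y) (K*Y1) (K*Y2)"
proof -
  note da = ccD[OF a]
  show ?thesis
  proof (rule ccI)
    fix i j assume ij: "i < dim_row (K*Y)" "j < dim_col (K*Y)"
    have "(K*Y)$$(i,j) = (\<Sum>x\<in>{0..<dim_row Y}. K$$(i,x) * Y$$(x,j))"
      using ij d by (simp add: scalar_prod_def)
    also have "\<dots> = (\<Sum>x\<in>{0..<dim_row Y}. g*(K$$(i,x) * Y1$$(x,j)) + (1-g)*(K$$(i,x) * Y2$$(x,j)))"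
      by (rule sum.cong) (use ij d in \<open>simp_all add: da(5) algebra_simps\<close>)
    also have "\<dots> = g*(K*Y1)$$(i,j) + (1-g)*(K*Y2)$$(i,j)"
      using ij d da(1-4) by (simp add: scalar_prod_def sum.distrib sum_distrib_left)
    finally show "(K*Y)$$(i,j) = g*(K*Y1)$$(i,j) + (1-g)*(K*Y2)$$(i,j)" .
  qed (use da in auto)
qed

lemma cc_four: assumes "cc g A A1 A2" "cc g B B1 B2" "cc g C C1 C2" "cc g D D1 D2"
  "dim_row B = dim_row A" "dim_col B = dim_col D" "dim_row C = dim_row D" "dim_col C = dim_col A"
  shows "cc g (four_block_mat A B C D) (four_block_mat A1 B1 C1 D1) (four_block_mat A2 B2 C2 D2)"
  using assms unfolding cc_def by auto

lemma cc_diag_Nil: "cc g (diag_block_mat []) (diag_block_mat []) (diag_block_mat [])"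
  by (rule cc_const)

lemma cc_diag_Cons: assumes "cc g A A1 A2" "cc g (diag_block_mat Bs) (diag_block_mat Bs1) (diag_block_mat Bs2)"
  shows "cc g (diag_block_mat (A#Bs)) (diag_block_mat (A1#Bs1)) (diag_block_mat (A2#Bs2))"
proof -
  have z: "cc g (0\<^sub>m a b) (0\<^sub>m a b) (0\<^sub>m a b)" for a b by (rule cc_const)
  have d: "dim_row A1 = dim_row A" "dim_row A2 = dim_row A" "dim_col A1 = dim_col A" "dim_col A2 = dim_col A"
    "dim_row (diag_block_mat Bs1) = dim_row (diag_block_mat Bs)" "dim_row (diag_block_mat Bs2) = dim_row (diag_block_mat Bs)"
    "dim_col (diag_block_mat Bs1) = dim_col (diag_block_mat Bs)" "dim_col (diag_block_mat Bs2) = dim_col (diag_block_mat Bs)"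
    using assms unfolding cc_def by auto
  show ?thesis unfolding diag_block_mat.simps Let_def d
    by (rule cc_four[OF assms(1) z z assms(2)]) auto
qed

lemma cc_diag_id: assumes "\<forall>j\<in>set xs. f j = g*f1 j + (1-g)*f2 j"
  shows "cc g (diag_block_mat (map (\<lambda>j. f j \<cdot>\<^sub>m 1\<^sub>m (d j)) xs))
    (diag_block_mat (map (\<lambda>j. f1 j \<cdot>\<^sub>m 1\<^sub>m (d j)) xs)) (diag_block_mat (map (\<lambda>j. f2 j \<cdot>\<^sub>m 1\<^sub>m (d j)) xs))"
  using assms
proof (induction xs)
  case Nil then show ?case using cc_diag_Nil by simp
next
  case (Cons a xs)
  then show ?case by (simp only: list.map) (rule cc_diag_Cons, rule cc_smult, auto)
qed

lemma sum_comb2: "(\<Sum>j\<in>S. (g*b j + (1-g)*c j) * (a j::real)) = g*(\<Sum>j\<in>S. b j * a j) + (1-g)*(\<Sum>j\<in>S. c j * a j)"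
proof -
  have "(\<Sum>j\<in>S. (g*b j + (1-g)*c j) * a j) = (\<Sum>j\<in>S. g*(b j * a j) + (1-g)*(c j * a j))"
    by (rule sum.cong) (simp_all add: algebra_simps)
  also have "\<dots> = g*(\<Sum>j\<in>S. b j * a j) + (1-g)*(\<Sum>j\<in>S. c j * a j)"
    by (simp add: sum.distrib sum_distrib_left)
  finally show ?thesis .
qed

lemma sum_comb3: "(\<Sum>j\<in>S. a j * (g*b j + (1-g)*c j)) = g*(\<Sum>j\<in>S. a j * b j) + (1-g)*(\<Sum>j\<in>S. a j * (c j::real))"
proof -
  have "(\<Sum>j\<in>S. a j * (g*b j + (1-g)*c j)) = (\<Sum>j\<in>S. g*(a j * b j) + (1-g)*(a j * c j))"
    by (rule sum.cong) (simp_all add: algebra_simps)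
  also have "\<dots> = g*(\<Sum>j\<in>S. a j * b j) + (1-g)*(\<Sum>j\<in>S. a j * c j)"
    by (simp add: sum.distrib sum_distrib_left)
  finally show ?thesis .
qed

lemma cc_negdef: assumes "cc g M M1 M2" "0 \<le> g" "g \<le> 1" "neg_def_mat M1" "neg_def_mat M2"
  shows "neg_def_mat M"
proof -
  note c = ccD(1-4)[OF assms(1)] and e = ccD(5)[OF assms(1)]
  have sq1: "M1 \<in> carrier_mat (dim_row M1) (dim_row M1)" "transpose_mat M1 = M1"
    and q1: "\<And>v. v \<in> carrier_vec (dim_row M1) \<Longrightarrow> v \<noteq> 0\<^sub>v (dim_row M1) \<Longrightarrow> v \<bullet> (M1 *\<^sub>v v) < 0"
    using assms(4) unfolding neg_def_mat_def by auto
  have sq2: "M2 \<in> carrier_mat (dim_row M2) (dim_row M2)" "transpose_mat M2 = M2"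
    and q2: "\<And>v. v \<in> carrier_vec (dim_row M2) \<Longrightarrow> v \<noteq> 0\<^sub>v (dim_row M2) \<Longrightarrow> v \<bullet> (M2 *\<^sub>v v) < 0"
    using assms(5) unfolding neg_def_mat_def by auto
  have cM1: "dim_col M1 = dim_row M1" by (rule carrier_matD(2)[OF sq1(1)])
  have sq: "dim_col M = dim_row M" using cM1 c(1) c(3) by linarith
  have s1: "M1 $$ (j,i) = M1 $$ (i,j)" if "i < dim_row M" "j < dim_row M" for i j
  proof -
    have d: "j < dim_col M1" "i < dim_row M1" using that c sq by auto
    have "M1 $$ (j,i) = transpose_mat M1 $$ (j,i)" by (simp only: sq1(2))
    also have "\<dots> = M1 $$ (i,j)" using d by simp
    finally show ?thesis .
  qed
  have s2: "M2 $$ (j,i) = M2 $$ (i,j)" if "i < dim_row M" "j < dim_row M" for i j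
  proof -
    have d: "j < dim_col M2" "i < dim_row M2" using that c sq by auto
    have "M2 $$ (j,i) = transpose_mat M2 $$ (j,i)" by (simp only: sq2(2))
    also have "\<dots> = M2 $$ (i,j)" using d by simp
    finally show ?thesis .
  qed
  have tr: "transpose_mat M = M"
  proof (rule eq_matI)
    fix i j assume ij: "i < dim_row M" "j < dim_col M"
    have "transpose_mat M $$ (i,j) = M $$ (j,i)" using ij sq by simp
    also have "\<dots> = g*M1$$(j,i) + (1-g)*M2$$(j,i)" using ij sq by (intro e) auto
    also have "\<dots> = g*M1$$(i,j) + (1-g)*M2$$(i,j)" using ij sq s1 s2 by simp
    also have "\<dots> = M $$ (i,j)" using ij by (simp add: e)
    finally show "transpose_mat M $$ (i,j) = M $$ (i,j)" .
  qed (use sq in auto)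
  have qf: "v \<bullet> (M *\<^sub>v v) = g * (v \<bullet> (M1 *\<^sub>v v)) + (1-g) * (v \<bullet> (M2 *\<^sub>v v))"
    if v: "v \<in> carrier_vec (dim_row M)" for v
  proof -
    have r: "(M *\<^sub>v v) $ i = g * (M1 *\<^sub>v v) $ i + (1-g) * (M2 *\<^sub>v v) $ i" if i: "i < dim_row M" for i
    proof -
      have "(M *\<^sub>v v) $ i = (\<Sum>j\<in>{0..<dim_row M}. M $$ (i,j) * v $ j)"
        using i v sq by (simp add: scalar_prod_def)
      also have "\<dots> = (\<Sum>j\<in>{0..<dim_row M}. (g * M1 $$ (i,j) + (1-g) * M2 $$ (i,j)) * v $ j)"
        by (rule sum.cong) (use i sq in \<open>simp_all add: e\<close>)
      also have "\<dots> = g * (\<Sum>j\<in>{0..<dim_row M}. M1 $$ (i,j) * v $ j) + (1-g) * (\<Sum>j\<in>{0..<dim_row M}. M2 $$ (i,j) * v $ j)"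
        by (rule sum_comb2)
      also have "\<dots> = g * (M1 *\<^sub>v v) $ i + (1-g) * (M2 *\<^sub>v v) $ i"
        using i v sq c by (simp add: scalar_prod_def)
      finally show ?thesis .
    qed
    have dv: "dim_vec (M *\<^sub>v v) = dim_row M" "dim_vec (M1 *\<^sub>v v) = dim_row M" "dim_vec (M2 *\<^sub>v v) = dim_row M"
      using c by auto
    have "v \<bullet> (M *\<^sub>v v) = (\<Sum>i\<in>{0..<dim_row M}. v $ i * (M *\<^sub>v v) $ i)"
      unfolding scalar_prod_def dv ..
    also have "\<dots> = (\<Sum>i\<in>{0..<dim_row M}. v $ i * (g * (M1 *\<^sub>v v) $ i + (1-g) * (M2 *\<^sub>v v) $ i))"
      by (intro sum.cong refl) (metis atLeastLessThan_iff r)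
    also have "\<dots> = g * (\<Sum>i\<in>{0..<dim_row M}. v $ i * (M1 *\<^sub>v v) $ i) + (1-g) * (\<Sum>i\<in>{0..<dim_row M}. v $ i * (M2 *\<^sub>v v) $ i)"
      by (rule sum_comb3)
    also have "\<dots> = g * (v \<bullet> (M1 *\<^sub>v v)) + (1-g) * (v \<bullet> (M2 *\<^sub>v v))"
      unfolding scalar_prod_def dv ..
    finally show ?thesis .
  qed
  show ?thesis unfolding neg_def_mat_def
  proof (intro conjI ballI impI)
    show "M \<in> carrier_mat (dim_row M) (dim_row M)" using sq by auto
    show "transpose_mat M = M" by (rule tr)
    fix v :: "real vec" assume v: "v \<in> carrier_vec (dim_row M)" "v \<noteq> 0\<^sub>v (dim_row M)"
    have a: "v \<bullet> (M1 *\<^sub>v v) < 0" using q1 v c by auto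
    have b: "v \<bullet> (M2 *\<^sub>v v) < 0" using q2 v c by auto
    have "g * (v \<bullet> (M1 *\<^sub>v v)) \<le> 0" using a assms(2) by (simp add: mult_nonneg_nonpos)
    moreover have "(1-g) * (v \<bullet> (M2 *\<^sub>v v)) \<le> 0" using b assms(3) by (simp add: mult_nonneg_nonpos)
    moreover have "g > 0 \<or> 1 - g > 0" using assms(2,3) by auto
    ultimately have "g * (v \<bullet> (M1 *\<^sub>v v)) + (1-g) * (v \<bullet> (M2 *\<^sub>v v)) < 0"
      using a b by (smt (verit) mult_pos_neg)
    then show "v \<bullet> (M *\<^sub>v v) < 0" using qf v by simp
  qed
qed

lemma hinv: "1 / hcomb g a b = g * (1/a) + (1-g) * (1/b)"
  unfolding hcomb_def by simp

lemma hinvN: "1 / (c * hcomb g a b) = g * (1/(c*a)) + (1-g) * (1/(c*b))"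
  unfolding hcomb_def by (simp add: divide_inverse inverse_mult_distrib algebra_simps)

lemma vstack_row: "dim_row (vstack n Ms) = sum_list (map dim_row Ms)"
  by (induction Ms) (auto simp: vstack_def append_rows_def)

lemma vstack_col: "dim_col (vstack n (M # Ms)) = dim_col M"
  by (simp add: vstack_def append_rows_def)

lemma sum_comb: "(\<Sum>j\<in>S. (g::real) * f1 j + (1-g) * f2 j) = g * (\<Sum>j\<in>S. f1 j) + (1-g) * (\<Sum>j\<in>S. f2 j)"
  by (simp add: sum.distrib sum_distrib_left)

lemma comb3: "(g*a+(1-g)*b) + (g*c+(1-g)*d) + (g*e+(1-g)*(f::real)) = g*(a+c+e) + (1-g)*(b+d+f)"
  by (simp add: algebra_simps)

theorem lemma1:
  fixes N n p m :: nat
    and E :: "(nat \<times> nat) set"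
    and \<rho>min \<rho>max \<rho> :: real
    and A :: "real \<Rightarrow> real mat"
    and B1 B2 R Qbar Qh :: "real mat"
    and C :: "nat \<Rightarrow> nat \<Rightarrow> real mat"
    and q :: "nat \<Rightarrow> nat \<Rightarrow> nat"
    and Y1 Y2 :: "real mat"
    and \<nu>1 \<nu>2 \<mu>1 \<mu>2 :: "nat \<Rightarrow> nat \<Rightarrow> real"
    and \<gamma> :: real
  assumes N: "N \<ge> 1"
    and E: "E \<subseteq> {0..N} \<times> {0..N}"
    and \<Gamma>: "\<rho>min \<le> \<rho>max"
    and A_dim: "\<forall>r \<in> {\<rho>min..\<rho>max}. A r \<in> carrier_mat n n"
    and A_cont: "\<forall>a < n. \<forall>b < n. continuous_on {\<rho>min..\<rho>max} (\<lambda>r. A r $$ (a, b))"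
    and B1: "B1 \<in> carrier_mat n p"
    and B2: "B2 \<in> carrier_mat n m"
    and C_dim: "\<forall>(j, i) \<in> E. C i j \<in> carrier_mat (q i j) n"
    and R: "R \<in> carrier_mat p p" "pos_def_mat R"
    and Qbar: "Qbar \<in> carrier_mat n n" "pos_def_mat Qbar"
    and Qh: "Qh \<in> carrier_mat n n" "pos_def_mat Qh" "Qh * Qh = Qbar"
    and \<rho>: "\<rho> \<in> {\<rho>min..\<rho>max}"
    and Y1: "Y1 \<in> carrier_mat n n" "pos_def_mat Y1"
    and Y2: "Y2 \<in> carrier_mat n n" "pos_def_mat Y2"
    and pos1: "\<forall>i \<in> {1..N}. (\<forall>j \<in> Sphi E N i. \<nu>1 i j > 0 \<and> \<mu>1 i j > 0)
                 \<and> (dd E i \<longrightarrow> \<nu>1 i 0 > 0) \<and> (ddbar E i \<longrightarrow> \<mu>1 0 i > 0)"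
    and pos2: "\<forall>i \<in> {1..N}. (\<forall>j \<in> Sphi E N i. \<nu>2 i j > 0 \<and> \<mu>2 i j > 0)
                 \<and> (dd E i \<longrightarrow> \<nu>2 i 0 > 0) \<and> (ddbar E i \<longrightarrow> \<mu>2 0 i > 0)"
    and LMI1: "\<forall>i \<in> {1..N}. neg_def_mat (Upsilon E N n (A \<rho>) B1 B2 R Qh C Y1 \<nu>1 \<mu>1 i)"
    and LMI2: "\<forall>i \<in> {1..N}. neg_def_mat (Upsilon E N n (A \<rho>) B1 B2 R Qh C Y2 \<nu>2 \<mu>2 i)"
    and \<gamma>: "\<gamma> \<in> {0..1}"
  shows "\<forall>i \<in> {1..N}. neg_def_mat
           (Upsilon E N n (A \<rho>) B1 B2 R Qh C (\<gamma> \<cdot>\<^sub>m Y1 + (1 - \<gamma>) \<cdot>\<^sub>m Y2)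
              (\<lambda>a b. hcomb \<gamma> (\<nu>1 a b) (\<nu>2 a b)) (\<lambda>a b. hcomb \<gamma> (\<mu>1 a b) (\<mu>2 a b)) i)"
proof (intro ballI)
  fix i assume i: "i \<in> {1..N}"
  define g where "g = \<gamma>"
  have g01: "0 \<le> g" "g \<le> 1" using \<gamma> g_def by auto
  define K where "K = vstack n ([Qh, Chat E N n C i, Cbar E N n C i]
                       @ (if dd E i then [C i 0] else [])
                       @ (if ddbar E i then [C 0 i] else []))"
  define Dl where "Dl = (\<lambda>\<nu> \<mu>. diag_block_mat ([- 1\<^sub>m (dim_row Qh), - Phi E N C \<nu> i, - Omega E N C \<mu> i]
                       @ (if dd E i then [- ((1 / \<nu> i 0) \<cdot>\<^sub>m 1\<^sub>m (dim_row (C i 0)))] else [])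
                       @ (if ddbar E i then [- ((1 / (real N * \<mu> 0 i)) \<cdot>\<^sub>m 1\<^sub>m (dim_row (C 0 i)))] else [])))"
  have U: "Upsilon E N n (A \<rho>) B1 B2 R Qh C Y \<nu> \<mu> i
      = four_block_mat (Zmat E N (A \<rho>) B1 B2 R \<nu> \<mu> Y i) (Y * transpose_mat K) (K * Y) (Dl \<nu> \<mu>)" for Y \<nu> \<mu>
    by (simp only: Upsilon_def Let_def K_def Dl_def)
  define Yc where "Yc = \<gamma> \<cdot>\<^sub>m Y1 + (1 - \<gamma>) \<cdot>\<^sub>m Y2"
  define h\<nu> where "h\<nu> = (\<lambda>a b. hcomb \<gamma> (\<nu>1 a b) (\<nu>2 a b))"
  define h\<mu> where "h\<mu> = (\<lambda>a b. hcomb \<gamma> (\<mu>1 a b) (\<mu>2 a b))"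
  have Ar: "A \<rho> \<in> carrier_mat n n" using A_dim \<rho> by auto
  have Yc: "cc g Yc Y1 Y2"
    by (rule ccI) (use Y1 Y2 in \<open>auto simp: Yc_def g_def\<close>)
  have Ycd: "Yc \<in> carrier_mat n n" using Y1 Y2 by (auto simp: Yc_def)
  have Kc: "dim_col K = n" using Qh by (simp add: K_def vstack_col)
  have KR: "dim_row K = dim_row Qh + sum_list (map (\<lambda>j. dim_row (C i j)) (sorted_list_of_set (Sphi E N i)))
     + sum_list (map (\<lambda>r. dim_row (C r i)) (sorted_list_of_set (Sbar E N i)))
     + (if dd E i then dim_row (C i 0) else 0) + (if ddbar E i then dim_row (C 0 i) else 0)"
    by (simp add: K_def vstack_row Chat_def Cbar_def o_def)
  have DR: "dim_row (Dl \<nu> \<mu>) = dim_row K" "dim_col (Dl \<nu> \<mu>) = dim_row K" for \<nu> \<mu>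
    unfolding KR Dl_def by (simp_all add: dim_diag_block_mat Phi_def Omega_def o_def)
  have scomb: "((\<Sum>j\<in>Sphi E N i. 1 / h\<nu> i j + 1 / h\<mu> i j)
        + (if dd E i then 1 / h\<nu> i 0 else 0)
        + (\<Sum>k\<in>{k \<in> {1..N}. ddbar E k}. 1 / h\<mu> 0 k))
     = g * ((\<Sum>j\<in>Sphi E N i. 1 / \<nu>1 i j + 1 / \<mu>1 i j)
        + (if dd E i then 1 / \<nu>1 i 0 else 0)
        + (\<Sum>k\<in>{k \<in> {1..N}. ddbar E k}. 1 / \<mu>1 0 k))
     + (1-g) * ((\<Sum>j\<in>Sphi E N i. 1 / \<nu>2 i j + 1 / \<mu>2 i j)
        + (if dd E i then 1 / \<nu>2 i 0 else 0)
        + (\<Sum>k\<in>{k \<in> {1..N}. ddbar E k}. 1 / \<mu>2 0 k))"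
  proof -
    have e1: "(\<Sum>j\<in>Sphi E N i. 1 / h\<nu> i j + 1 / h\<mu> i j) =
      (\<Sum>j\<in>Sphi E N i. g * (1 / \<nu>1 i j + 1 / \<mu>1 i j) + (1-g) * (1 / \<nu>2 i j + 1 / \<mu>2 i j))"
      by (rule sum.cong) (auto simp: h\<nu>_def h\<mu>_def hinv g_def algebra_simps)
    have e2: "(\<Sum>k\<in>{k \<in> {1..N}. ddbar E k}. 1 / h\<mu> 0 k) =
      (\<Sum>k\<in>{k \<in> {1..N}. ddbar E k}. g * (1 / \<mu>1 0 k) + (1-g) * (1 / \<mu>2 0 k))"
      by (rule sum.cong) (auto simp: h\<mu>_def hinv g_def)
    have e3: "(if dd E i then 1 / h\<nu> i 0 else 0) = g * (if dd E i then 1 / \<nu>1 i 0 else 0)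
       + (1-g) * (if dd E i then 1 / \<nu>2 i 0 else 0)"
      by (simp add: h\<nu>_def hinv g_def)
    show ?thesis unfolding e1 e2 e3 sum_comb by (rule comb3)
  qed
  have Zc: "cc g (Zmat E N (A \<rho>) B1 B2 R h\<nu> h\<mu> Yc i) (Zmat E N (A \<rho>) B1 B2 R \<nu>1 \<mu>1 Y1 i)
      (Zmat E N (A \<rho>) B1 B2 R \<nu>2 \<mu>2 Y2 i)"
    unfolding Zmat_def
    apply (rule cc_plus)
       apply (rule cc_minus)
          apply (rule cc_plus)
             apply (rule cc_multl[OF Yc])
    using Ar Ycd apply simp
            apply (rule cc_multr[OF Yc])
    using Ar Ycd apply simp
    using Ar Ycd apply simp
    using Ar Ycd apply simp
        apply (rule cc_const)
    using Ar Ycd B1 apply simp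
    using Ar Ycd B1 apply simp
     apply (rule cc_smult[OF scomb])
    using Ar Ycd B1 B2 apply simp
    using Ar Ycd B1 B2 apply simp
    done
  have Dc: "cc g (Dl h\<nu> h\<mu>) (Dl \<nu>1 \<mu>1) (Dl \<nu>2 \<mu>2)"
  proof -
    have P: "cc g (- Phi E N C h\<nu> i) (- Phi E N C \<nu>1 i) (- Phi E N C \<nu>2 i)"
      unfolding Phi_def by (rule cc_uminus, rule cc_diag_id) (auto simp: h\<nu>_def hinv g_def)
    have O: "cc g (- Omega E N C h\<mu> i) (- Omega E N C \<mu>1 i) (- Omega E N C \<mu>2 i)"
      unfolding Omega_def by (rule cc_uminus, rule cc_diag_id) (auto simp: h\<mu>_def hinv g_def)
    have I: "cc g (- 1\<^sub>m (dim_row Qh)) (- 1\<^sub>m (dim_row Qh)) (- 1\<^sub>m (dim_row Qh))" by (rule cc_const)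
    have L1: "cc g (diag_block_mat ((if dd E i then [- ((1 / h\<nu> i 0) \<cdot>\<^sub>m 1\<^sub>m (dim_row (C i 0)))] else [])
                       @ (if ddbar E i then [- ((1 / (real N * h\<mu> 0 i)) \<cdot>\<^sub>m 1\<^sub>m (dim_row (C 0 i)))] else [])))
       (diag_block_mat ((if dd E i then [- ((1 / \<nu>1 i 0) \<cdot>\<^sub>m 1\<^sub>m (dim_row (C i 0)))] else [])
                       @ (if ddbar E i then [- ((1 / (real N * \<mu>1 0 i)) \<cdot>\<^sub>m 1\<^sub>m (dim_row (C 0 i)))] else [])))
       (diag_block_mat ((if dd E i then [- ((1 / \<nu>2 i 0) \<cdot>\<^sub>m 1\<^sub>m (dim_row (C i 0)))] else [])
                       @ (if ddbar E i then [- ((1 / (real N * \<mu>2 0 i)) \<cdot>\<^sub>m 1\<^sub>m (dim_row (C 0 i)))] else [])))"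
    proof -
      have a: "cc g (- ((1 / h\<nu> i 0) \<cdot>\<^sub>m 1\<^sub>m (dim_row (C i 0)))) (- ((1 / \<nu>1 i 0) \<cdot>\<^sub>m 1\<^sub>m (dim_row (C i 0))))
         (- ((1 / \<nu>2 i 0) \<cdot>\<^sub>m 1\<^sub>m (dim_row (C i 0))))"
        by (rule cc_uminus, rule cc_smult) (simp add: h\<nu>_def hinv g_def)
      have b: "cc g (- ((1 / (real N * h\<mu> 0 i)) \<cdot>\<^sub>m 1\<^sub>m (dim_row (C 0 i)))) (- ((1 / (real N * \<mu>1 0 i)) \<cdot>\<^sub>m 1\<^sub>m (dim_row (C 0 i))))
         (- ((1 / (real N * \<mu>2 0 i)) \<cdot>\<^sub>m 1\<^sub>m (dim_row (C 0 i))))"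
        by (rule cc_uminus, rule cc_smult) (simp add: h\<mu>_def hinvN g_def)
      show ?thesis
        by (cases "dd E i"; cases "ddbar E i")
          (simp_all only: if_True if_False append.simps,
           (intro cc_diag_Cons a b cc_diag_Nil)+)
    qed
    show ?thesis unfolding Dl_def append.simps
      by (intro cc_diag_Cons I P O L1)
  qed
  have Uc: "cc g (Upsilon E N n (A \<rho>) B1 B2 R Qh C Yc h\<nu> h\<mu> i)
     (Upsilon E N n (A \<rho>) B1 B2 R Qh C Y1 \<nu>1 \<mu>1 i) (Upsilon E N n (A \<rho>) B1 B2 R Qh C Y2 \<nu>2 \<mu>2 i)"
    unfolding U
    apply (rule cc_four[OF Zc cc_multr[OF Yc] cc_multl[OF Yc] Dc])
    using Ycd Kc Ar B1 B2 DR by (simp_all add: Zmat_def)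
  show "neg_def_mat (Upsilon E N n (A \<rho>) B1 B2 R Qh C (\<gamma> \<cdot>\<^sub>m Y1 + (1 - \<gamma>) \<cdot>\<^sub>m Y2)
              (\<lambda>a b. hcomb \<gamma> (\<nu>1 a b) (\<nu>2 a b)) (\<lambda>a b. hcomb \<gamma> (\<mu>1 a b) (\<mu>2 a b)) i)"
    using cc_negdef[OF Uc g01] LMI1 LMI2 i unfolding Yc_def h\<nu>_def h\<mu>_def by auto
qed

end
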